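(* Let $\Phi(f)(x,y)=1-f(1-x,1-y)$. If $\otimes$ is a uninorm satisfying properties $A$ and $B$, then the rearrangement inequality and the dual rearrangement inequality hold for $(\otimes,\Phi(\otimes))$. If $\oplus$ is a uninorm satisfying properties $A'$ and $B'$, then the rearrangement inequality and the dual rearrangement inequality hold for $(\Phi(\oplus),\oplus)$.
   Context: A uninorm is a function $\otimes:[0,1]^2\to[0,1]$ that is commutative, associative, monotonic ($x\leq y$ implies $x\otimes z\leq y\otimes z$), and has an identity element $e\in[0,1]$ (note $\Phi$ of a uninorm is again a uninorm). Properties of $f:[0,1]^2\to[0,1]$: $A$: for all $0\leq x\leq y\leq z\leq w\leq 1$, $w+x\leq y+z\Rightarrow f(x,w)\leq f(y,z)$; $A'$: for all $0\leq x\leq y\leq z\leq w\leq 1$, $w+x\geq y+z\Rightarrow f(x,w)\geq f(y,z)$; $B$: for all $0\leq x\leq y\leq 1$, $0\leq z\leq w\leq1$, $f(x,w)-f(x,z)\leq f(y,w)-f(y,z)$; $B'$: same with $\geq$. For uninorms, $(\otimes,\oplus)$ satisfies the rearrangement inequality if for every $n\geq1$, all $0\leq x_1\leq\cdots\leq x_n\leq 1$, $0\leq y_1\leq\cdots\leq y_n\leq 1$ and every permutation $\sigma$ of $\{1,\dots,n\}$, $$(x_n\otimes y_1)\oplus\cdots\oplus(x_1\otimes y_n)\leq (x_{\sigma(1)}\otimes y_1)\oplus\cdots\oplus(x_{\sigma(n)}\otimes y_n)\leq (x_1\otimes y_1)\oplus\cdots\oplus(x_n\otimes y_n),$$ and the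 dual rearrangement inequality if for all such data $$(x_n\oplus y_1)\otimes\cdots\otimes(x_1\oplus y_n)\geq (x_{\sigma(1)}\oplus y_1)\otimes\cdots\otimes(x_{\sigma(n)}\oplus y_n)\geq (x_1\oplus y_1)\otimes\cdots\otimes(x_n\oplus y_n).$$ *)

theory Defs
  imports "HOL-Analysis.Analysis" "HOL-Combinatorics.Permutations"
begin


definition uninorm :: "(real \<Rightarrow> real \<Rightarrow> real) \<Rightarrow> bool" where
  "uninorm f \<longleftrightarrow>
     (\<forall>x\<in>{0..1}. \<forall>y\<in>{0..1}. f x y \<in> {0..1}) \<and>
     (\<forall>x\<in>{0..1}. \<forall>y\<in>{0..1}. f x y = f y x) \<and>
     (\<forall>x\<in>{0..1}. \<forall>y\<in>{0..1}. \<forall>z\<in>{0..1}. f (f x y) z = f x (f y z)) \<and>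
     (\<forall>x\<in>{0..1}. \<forall>y\<in>{0..1}. \<forall>z\<in>{0..1}. x \<le> y \<longrightarrow> f x z \<le> f y z) \<and>
     (\<exists>e\<in>{0..1}. \<forall>x\<in>{0..1}. f e x = x)"

definition Phi :: "(real \<Rightarrow> real \<Rightarrow> real) \<Rightarrow> real \<Rightarrow> real \<Rightarrow> real" where
  "Phi f x y = 1 - f (1 - x) (1 - y)"

definition propA :: "(real \<Rightarrow> real \<Rightarrow> real) \<Rightarrow> bool" where
  "propA f \<longleftrightarrow> (\<forall>x y z w. 0 \<le> x \<and> x \<le> y \<and> y \<le> z \<and> z \<le> w \<and> w \<le> 1 \<longrightarrow>
      w + x \<le> y + z \<longrightarrow> f x w \<le> f y z)"

definition propA' :: "(real \<Rightarrow> real \<Rightarrow> real) \<Rightarrow> bool" where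
  "propA' f \<longleftrightarrow> (\<forall>x y z w. 0 \<le> x \<and> x \<le> y \<and> y \<le> z \<and> z \<le> w \<and> w \<le> 1 \<longrightarrow>
      w + x \<ge> y + z \<longrightarrow> f x w \<ge> f y z)"

definition propB :: "(real \<Rightarrow> real \<Rightarrow> real) \<Rightarrow> bool" where
  "propB f \<longleftrightarrow> (\<forall>x y z w. 0 \<le> x \<and> x \<le> y \<and> y \<le> 1 \<and> 0 \<le> z \<and> z \<le> w \<and> w \<le> 1 \<longrightarrow>
      f x w - f x z \<le> f y w - f y z)"

definition propB' :: "(real \<Rightarrow> real \<Rightarrow> real) \<Rightarrow> bool" where
  "propB' f \<longleftrightarrow> (\<forall>x y z w. 0 \<le> x \<and> x \<le> y \<and> y \<le> 1 \<and> 0 \<le> z \<and> z \<le> w \<and> w \<le> 1 \<longrightarrow>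
      f x w - f x z \<ge> f y w - f y z)"

fun iter :: "(real \<Rightarrow> real \<Rightarrow> real) \<Rightarrow> (nat \<Rightarrow> real) \<Rightarrow> nat \<Rightarrow> real" where
  "iter f a 0 = a 0"
| "iter f a (Suc k) = f (iter f a k) (a (Suc k))"

definition bigop :: "(real \<Rightarrow> real \<Rightarrow> real) \<Rightarrow> nat \<Rightarrow> (nat \<Rightarrow> real) \<Rightarrow> real" where
  "bigop f n a = iter f a (n - 1)"

text \<open>Indices 0..n-1 stand for 1..n of the paper.\<close>
definition rearrangement :: "(real \<Rightarrow> real \<Rightarrow> real) \<Rightarrow> (real \<Rightarrow> real \<Rightarrow> real) \<Rightarrow> bool" where
  "rearrangement otimes oplus \<longleftrightarrow>
    (\<forall>n::nat. \<forall>x y :: nat \<Rightarrow> real. \<forall>\<sigma>.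
      n \<ge> 1 \<longrightarrow>
      (\<forall>i<n. 0 \<le> x i \<and> x i \<le> 1 \<and> 0 \<le> y i \<and> y i \<le> 1) \<longrightarrow>
      (\<forall>i j. i \<le> j \<and> j < n \<longrightarrow> x i \<le> x j \<and> y i \<le> y j) \<longrightarrow>
      \<sigma> permutes {..<n} \<longrightarrow>
      bigop oplus n (\<lambda>i. otimes (x (n - 1 - i)) (y i))
        \<le> bigop oplus n (\<lambda>i. otimes (x (\<sigma> i)) (y i)) \<and>
      bigop oplus n (\<lambda>i. otimes (x (\<sigma> i)) (y i))
        \<le> bigop oplus n (\<lambda>i. otimes (x i) (y i)))"

definition dual_rearrangement :: "(real \<Rightarrow> real \<Rightarrow> real) \<Rightarrow> (real \<Rightarrow> real \<Rightarrow> real) \<Rightarrow> bool" where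
  "dual_rearrangement otimes oplus \<longleftrightarrow>
    (\<forall>n::nat. \<forall>x y :: nat \<Rightarrow> real. \<forall>\<sigma>.
      n \<ge> 1 \<longrightarrow>
      (\<forall>i<n. 0 \<le> x i \<and> x i \<le> 1 \<and> 0 \<le> y i \<and> y i \<le> 1) \<longrightarrow>
      (\<forall>i j. i \<le> j \<and> j < n \<longrightarrow> x i \<le> x j \<and> y i \<le> y j) \<longrightarrow>
      \<sigma> permutes {..<n} \<longrightarrow>
      bigop otimes n (\<lambda>i. oplus (x (n - 1 - i)) (y i))
        \<ge> bigop otimes n (\<lambda>i. oplus (x (\<sigma> i)) (y i)) \<and>
      bigop otimes n (\<lambda>i. oplus (x (\<sigma> i)) (y i))
        \<ge> bigop otimes n (\<lambda>i. oplus (x i) (y i)))"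

end

theory Submission
  imports Defs
begin


definition semi :: "(real \<Rightarrow> real \<Rightarrow> real) \<Rightarrow> bool" where
  "semi f \<longleftrightarrow>
     (\<forall>x\<in>{0..1}. \<forall>y\<in>{0..1}. f x y \<in> {0..1}) \<and>
     (\<forall>x\<in>{0..1}. \<forall>y\<in>{0..1}. f x y = f y x) \<and>
     (\<forall>x\<in>{0..1}. \<forall>y\<in>{0..1}. \<forall>z\<in>{0..1}. f (f x y) z = f x (f y z)) \<and>
     (\<forall>x\<in>{0..1}. \<forall>y\<in>{0..1}. \<forall>z\<in>{0..1}. x \<le> y \<longrightarrow> f x z \<le> f y z)"

lemma semiD:
  assumes "semi f"
  shows "\<And>x y. x\<in>{0..1} \<Longrightarrow> y\<in>{0..1} \<Longrightarrow> f x y \<in> {0..1}"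
    and "\<And>x y. x\<in>{0..1} \<Longrightarrow> y\<in>{0..1} \<Longrightarrow> f x y = f y x"
    and "\<And>x y z. x\<in>{0..1} \<Longrightarrow> y\<in>{0..1} \<Longrightarrow> z\<in>{0..1} \<Longrightarrow> f (f x y) z = f x (f y z)"
    and "\<And>x y z. x\<in>{0..1} \<Longrightarrow> y\<in>{0..1} \<Longrightarrow> z\<in>{0..1} \<Longrightarrow> x \<le> y \<Longrightarrow> f x z \<le> f y z"
  using assms unfolding semi_def by blast+

lemma semi_mono2:
  assumes "semi f" "x\<in>{0..1}" "y\<in>{0..1}" "z\<in>{0..1}" "x \<le> y"
  shows "f z x \<le> f z y"
  using semiD[OF assms(1)] assms(2-5) by metis

lemma uninorm_semi: "uninorm f \<Longrightarrow> semi f"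
  unfolding uninorm_def semi_def by blast

lemma semi_Phi: assumes "semi f" shows "semi (Phi f)"
proof -
  note s = semiD[OF assms]
  have a: "\<And>x. x\<in>{0..1::real} \<Longrightarrow> 1 - x \<in> {0..1}" by auto
  have b: "\<And>x. x\<in>{0..1::real} \<Longrightarrow> 1 - (1 - x) = x" by auto
  show ?thesis unfolding semi_def Phi_def
  proof (intro conjI ballI impI)
    fix x y assume "x\<in>{0..1::real}" "y\<in>{0..1::real}"
    then show "1 - f (1 - x) (1 - y) \<in> {0..1}" using s(1)[OF a a] by auto
    show "1 - f (1 - x) (1 - y) = 1 - f (1 - y) (1 - x)" using s(2)[OF a a] \<open>x\<in>_\<close> \<open>y\<in>_\<close> by auto
  next
    fix x y z assume xyz: "x\<in>{0..1::real}" "y\<in>{0..1::real}" "z\<in>{0..1::real}"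
    have i1: "f (1-x) (1-y) \<in> {0..1}" "f (1-y) (1-z) \<in> {0..1}" using s(1)[OF a a] xyz by auto
    show "1 - f (1 - (1 - f (1 - x) (1 - y))) (1 - z) = 1 - f (1 - x) (1 - (1 - f (1 - y) (1 - z)))"
      using s(3)[OF a[OF xyz(1)] a[OF xyz(2)] a[OF xyz(3)]] by simp
  next
    fix x y z assume xyz: "x\<in>{0..1::real}" "y\<in>{0..1::real}" "z\<in>{0..1::real}" "x \<le> y"
    show "1 - f (1 - x) (1 - z) \<le> 1 - f (1 - y) (1 - z)"
      using s(4)[OF a[OF xyz(2)] a[OF xyz(1)] a[OF xyz(3)]] xyz(4) by simp
  qed
qed

lemma Phi_Phi: "Phi (Phi f) = f"
  by (simp add: Phi_def fun_eq_iff)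

lemma iter_in: "semi f \<Longrightarrow> (\<forall>i\<le>m. a i \<in> {0..1}) \<Longrightarrow> iter f a m \<in> {0..1}"
proof (induction m)
  case (Suc m)
  then have "iter f a m \<in> {0..1}" "a (Suc m) \<in> {0..1}" by auto
  then show ?case using semiD(1)[OF Suc(2)] by simp
qed simp

lemma iter_cong: "(\<forall>i\<le>m. a i = b i) \<Longrightarrow> iter f a m = iter f b m"
  by (induction m) auto

lemma iter_Phi: "iter (Phi f) (\<lambda>i. 1 - a i) m = 1 - iter f a m"
  by (induction m) (auto simp: Phi_def)

lemma pull_out:
  assumes "semi f" "\<forall>i\<le>Suc m. a i \<in> {0..1}" "k \<le> Suc m"
  shows "iter f a (Suc m) = f (iter f (\<lambda>i. if i<k then a i else a (Suc i)) m) (a k)"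
  using assms(2,3)
proof (induction m)
  case 0
  show ?case
  proof (cases "k = 0")
    case True
    then show ?thesis using 0 semiD(2)[OF assms(1), of "a 0" "a 1"] by auto
  next
    case False
    then have "k = 1" using 0 by auto
    then show ?thesis by auto
  qed
next
  case (Suc m)
  define b where "b = (\<lambda>i. if i<k then a i else a (Suc i))"
  show ?case
  proof (cases "k = Suc (Suc m)")
    case True
    have "iter f b (Suc m) = iter f a (Suc m)"
      by (rule iter_cong) (auto simp: b_def True)
    then show ?thesis using True by (simp add: b_def)
  next
    case False
    then have k: "k \<le> Suc m" using Suc by auto
    have IH: "iter f a (Suc m) = f (iter f b m) (a k)" using Suc k by (auto simp: b_def)
    have bin: "iter f b m \<in> {0..1}"
      by (rule iter_in[OF assms(1)]) (use Suc in \<open>auto simp: b_def\<close>)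
    have ak: "a k \<in> {0..1}" "a (Suc (Suc m)) \<in> {0..1}" using Suc k by auto
    have bS: "b (Suc m) = a (Suc (Suc m))" using k by (simp add: b_def)
    note s = semiD[OF assms(1)]
    have "iter f a (Suc (Suc m)) = f (f (iter f b m) (a k)) (a (Suc (Suc m)))" using IH by simp
    also have "\<dots> = f (iter f b m) (f (a k) (a (Suc (Suc m))))" using s(3)[OF bin ak] .
    also have "\<dots> = f (iter f b m) (f (a (Suc (Suc m))) (a k))" using s(2)[OF ak] by simp
    also have "\<dots> = f (f (iter f b m) (a (Suc (Suc m)))) (a k)" using s(3)[OF bin ak(2) ak(1)] by simp
    also have "\<dots> = f (iter f b (Suc m)) (a k)" using bS by simp
    finally show ?thesis by (simp add: b_def)
  qed
qed


lemma max_lemma: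
  assumes "semi f"
  shows "(\<forall>a\<le>m. \<forall>i\<le>m. H a i \<in> {0..1}) \<Longrightarrow>
    (\<forall>a b i j. a \<le> b \<and> b \<le> m \<and> i \<le> j \<and> j \<le> m \<longrightarrow> f (H a j) (H b i) \<le> f (H a i) (H b j)) \<Longrightarrow>
    \<sigma> permutes {..<Suc m} \<Longrightarrow>
    iter f (\<lambda>i. H (\<sigma> i) i) m \<le> iter f (\<lambda>i. H i i) m"
proof (induction m arbitrary: \<sigma>)
  case 0
  then have "\<sigma> 0 = 0" using permutes_in_image[OF 0(3), of 0] by auto
  then show ?case by simp
next
  case (Suc m)
  note s = semiD[OF assms]
  define N where "N = Suc m"
  have pN: "\<sigma> permutes insert N {..<N}" using Suc(4) N_def by (simp add: lessThan_Suc)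
  define \<tau> where "\<tau> = Transposition.transpose N (\<sigma> N) \<circ> \<sigma>"
  have tp: "\<tau> permutes {..<Suc m}" using permutes_insert_lemma[OF pN] by (simp add: \<tau>_def N_def)
  have tN: "\<tau> N = N" by (simp add: \<tau>_def)
  define k where "k = inv \<sigma> N"
  have sk: "\<sigma> k = N" using permutes_inverses(1)[OF Suc(4)] by (simp add: k_def)
  have kle: "k \<le> N" using permutes_in_image[OF Suc(4), of k] sk N_def by auto
  have sNle: "\<sigma> N \<le> N" using permutes_in_image[OF Suc(4), of N] N_def by auto
  define c where "c = (\<lambda>i. H (\<sigma> i) i)"
  define c' where "c' = (\<lambda>i. H (\<tau> i) i)"
  have Hin: "\<And>a i. a \<le> N \<Longrightarrow> i \<le> N \<Longrightarrow> H a i \<in> {0..1}" using Suc(2) N_def by auto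
  have sin: "\<sigma> i \<le> N" if "i \<le> N" for i
  proof -
    have "i \<in> {..<Suc N}" using that by simp
    then have "\<sigma> i \<in> {..<Suc N}" using permutes_in_image[OF Suc(4), of i] N_def by simp
    then show ?thesis by simp
  qed
  have tin: "\<tau> i \<le> N" if "i \<le> N" for i
  proof -
    have "i \<in> {..<Suc m} \<or> i = N" using that N_def by auto
    then show ?thesis
    proof
      assume "i \<in> {..<Suc m}"
      then have "\<tau> i \<in> {..<Suc m}" using permutes_in_image[OF tp, of i] by simp
      then show ?thesis using N_def by simp
    next
      assume "i = N" then show ?thesis using tN by simp
    qed
  qed
  have cin: "\<forall>i\<le>N. c i \<in> {0..1}" unfolding c_def using Hin sin by blast
  have c'in: "\<forall>i\<le>N. c' i \<in> {0..1}" unfolding c'_def using Hin tin by blast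
  have claim1: "iter f c N \<le> iter f c' N"
  proof (cases "k = N")
    case True
    then have "\<sigma> N = N" using sk by simp
    then have "\<tau> = \<sigma>" by (simp add: \<tau>_def)
    then show ?thesis by (simp add: c_def c'_def)
  next
    case False
    then have kN: "k < N" using kle by simp
    have tk: "\<tau> k = \<sigma> N" using sk by (simp add: \<tau>_def)
    have toth: "\<tau> i = \<sigma> i" if "i \<noteq> k" "i \<noteq> N" for i
    proof -
      have inj: "inj \<sigma>" using permutes_inj[OF Suc(4)] .
      have "\<sigma> i \<noteq> N" using that sk injD[OF inj] by metis
      moreover have "\<sigma> i \<noteq> \<sigma> N" using that injD[OF inj] by metis
      ultimately show ?thesis by (simp add: \<tau>_def Transposition.transpose_def)
    qed
    have ck: "c k = H N k" "c N = H (\<sigma> N) N" "c' k = H (\<sigma> N) k" "c' N = H N N"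
      using sk tk tN by (auto simp: c_def c'_def)
    have ckin: "c k \<in> {0..1}" "c N \<in> {0..1}" "c' k \<in> {0..1}" "c' N \<in> {0..1}"
      using cin c'in kN by auto
    have sw: "f (c k) (c N) \<le> f (c' k) (c' N)"
    proof -
      have "f (H (\<sigma> N) N) (H N k) \<le> f (H (\<sigma> N) k) (H N N)"
        using Suc(3)[rule_format, of "\<sigma> N" N k N] sNle kN N_def by simp
      then show ?thesis using ck s(2)[OF ckin(1,2)] by simp
    qed
    have key: "\<exists>B. B \<in> {0..1} \<and> iter f c m = (if m = 0 then c k else f B (c k)) \<and>
                   iter f c' m = (if m = 0 then c' k else f B (c' k))"
    proof (cases m)
      case 0
      then show ?thesis using kN N_def by (auto intro: exI[of _ 0])
    next
      case (Suc m')
      define b where "b = (\<lambda>i. if i<k then c i else c (Suc i))"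
      define b' where "b' = (\<lambda>i. if i<k then c' i else c' (Suc i))"
      have "iter f c m = f (iter f b m') (c k)"
        unfolding b_def using pull_out[OF assms, of m' c k] Suc cin kN N_def by auto
      moreover have "iter f c' m = f (iter f b' m') (c' k)"
        unfolding b'_def using pull_out[OF assms, of m' c' k] Suc c'in kN N_def by auto
      moreover have "iter f b' m' = iter f b m'"
      proof (rule iter_cong, intro allI impI)
        fix i assume "i \<le> m'"
        then show "b' i = b i" unfolding b_def b'_def c_def c'_def
          using toth Suc N_def by auto
      qed
      moreover have "iter f b m' \<in> {0..1}"
        by (rule iter_in[OF assms]) (use cin Suc N_def in \<open>auto simp: b_def\<close>)
      ultimately show ?thesis using Suc by auto
    qed
    then obtain B where B: "B \<in> {0..1}" "iter f c m = (if m = 0 then c k else f B (c k))"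
                   "iter f c' m = (if m = 0 then c' k else f B (c' k))" by blast
    show ?thesis
    proof (cases "m = 0")
      case True
      then show ?thesis using B sw N_def by simp
    next
      case False
      have "iter f c N = f (f B (c k)) (c N)" using B False N_def by simp
      also have "\<dots> = f B (f (c k) (c N))" using s(3)[OF B(1) ckin(1,2)] .
      also have "\<dots> \<le> f B (f (c' k) (c' N))"
        by (rule semi_mono2[OF assms _ _ B(1) sw]) (use s(1) ckin in auto)
      also have "\<dots> = f (f B (c' k)) (c' N)" using s(3)[OF B(1) ckin(3,4)] by simp
      also have "\<dots> = iter f c' N" using B False N_def by simp
      finally show ?thesis .
    qed
  qed
  have IH: "iter f (\<lambda>i. H (\<tau> i) i) m \<le> iter f (\<lambda>i. H i i) m"
  proof (rule Suc(1))
    show "\<forall>a\<le>m. \<forall>i\<le>m. H a i \<in> {0..1}" using Suc(2) by simp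
    show "\<forall>a b i j. a \<le> b \<and> b \<le> m \<and> i \<le> j \<and> j \<le> m \<longrightarrow> f (H a j) (H b i) \<le> f (H a i) (H b j)"
    proof (intro allI impI)
      fix a b i j assume "a \<le> b \<and> b \<le> m \<and> i \<le> j \<and> j \<le> m"
      then show "f (H a j) (H b i) \<le> f (H a i) (H b j)" using Suc(3)[rule_format, of a b i j] by simp
    qed
    show "\<tau> permutes {..<Suc m}" by (rule tp)
  qed
  have "iter f c' N = f (iter f c' m) (H N N)" using tN by (simp add: N_def c'_def)
  also have "\<dots> \<le> f (iter f (\<lambda>i. H i i) m) (H N N)"
  proof (rule s(4))
    show "iter f c' m \<in> {0..1}" by (rule iter_in[OF assms]) (use c'in N_def in auto)
    show "iter f (\<lambda>i. H i i) m \<in> {0..1}" by (rule iter_in[OF assms]) (use Hin N_def in auto)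
    show "H N N \<in> {0..1}" using Hin by auto
    show "iter f c' m \<le> iter f (\<lambda>i. H i i) m" using IH by (simp add: c'_def)
  qed
  also have "\<dots> = iter f (\<lambda>i. H i i) N" by (simp add: N_def)
  finally show ?case using claim1 by (simp add: c_def N_def)
qed



lemma rev_permutes: "(\<lambda>j. if j \<le> m then m - j else j) permutes {..<Suc m}"
proof (rule bij_imp_permutes)
  define r where "r = (\<lambda>j::nat. if j \<le> m then m - j else j)"
  have inj: "inj_on r {..<Suc m}"
  proof (rule inj_onI)
    fix x y assume "x \<in> {..<Suc m}" "y \<in> {..<Suc m}" "r x = r y"
    then have "x \<le> m" "y \<le> m" "m - x = m - y" by (simp_all add: r_def)
    then show "x = y" by linarith
  qed
  have img: "r ` {..<Suc m} = {..<Suc m}"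
  proof
    show "r ` {..<Suc m} \<subseteq> {..<Suc m}" by (auto simp: r_def)
    show "{..<Suc m} \<subseteq> r ` {..<Suc m}"
    proof
      fix j assume j: "j \<in> {..<Suc m}"
      then have "r (m - j) = j" by (simp add: r_def)
      moreover have "m - j \<in> {..<Suc m}" by simp
      ultimately show "j \<in> r ` {..<Suc m}" by (metis image_eqI)
    qed
  qed
  show "bij_betw (\<lambda>j. if j \<le> m then m - j else j) {..<Suc m} {..<Suc m}"
    using bij_betw_imageI[OF inj img] by (simp add: r_def)
  show "\<And>x. x \<notin> {..<Suc m} \<Longrightarrow> (if x \<le> m then m - x else x) = x" by auto
qed


lemma min_lemma:
  assumes "semi f"
    and Hin: "\<forall>a\<le>m. \<forall>i\<le>m. H a i \<in> {0..1}"
    and sw: "\<forall>a b i j. a \<le> b \<and> b \<le> m \<and> i \<le> j \<and> j \<le> m \<longrightarrow> f (H a j) (H b i) \<le> f (H a i) (H b j)"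
    and sp: "\<sigma> permutes {..<Suc m}"
  shows "iter f (\<lambda>i. H (m - i) i) m \<le> iter f (\<lambda>i. H (\<sigma> i) i) m"
proof -
  note s = semiD[OF assms(1)]
  define H' where "H' = (\<lambda>a i. 1 - H (m - a) i)"
  define \<tau> where "\<tau> = (\<lambda>j. if j \<le> m then m - j else j) \<circ> \<sigma>"
  have tp: "\<tau> permutes {..<Suc m}" unfolding \<tau>_def
    by (rule permutes_compose[OF sp rev_permutes])
  have sin: "\<sigma> i \<le> m" if "i \<le> m" for i
  proof -
    have "i \<in> {..<Suc m}" using that by simp
    then have "\<sigma> i \<in> {..<Suc m}" using permutes_in_image[OF sp, of i] by simp
    then show ?thesis by simp
  qed
  have H'in: "\<forall>a\<le>m. \<forall>i\<le>m. H' a i \<in> {0..1}"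
  proof (intro allI impI)
    fix a i assume "a \<le> m" "i \<le> m"
    then have "H (m - a) i \<in> {0..1}" using Hin by simp
    then show "H' a i \<in> {0..1}" by (auto simp: H'_def)
  qed
  have sw': "\<forall>a b i j. a \<le> b \<and> b \<le> m \<and> i \<le> j \<and> j \<le> m \<longrightarrow> Phi f (H' a j) (H' b i) \<le> Phi f (H' a i) (H' b j)"
  proof (intro allI impI)
    fix a b i j assume h: "a \<le> b \<and> b \<le> m \<and> i \<le> j \<and> j \<le> m"
    have 1: "f (H (m - b) j) (H (m - a) i) \<le> f (H (m - b) i) (H (m - a) j)"
    proof -
      have "m - b \<le> m - a" "m - a \<le> m" using h by auto
      then show ?thesis using sw[rule_format, of "m - b" "m - a" i j] h by blast
    qed
    have in1: "H (m - b) j \<in> {0..1}" "H (m - a) i \<in> {0..1}" "H (m - b) i \<in> {0..1}" "H (m - a) j \<in> {0..1}"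
      using Hin h by auto
    have "f (H (m - a) i) (H (m - b) j) \<le> f (H (m - a) j) (H (m - b) i)"
      using 1 s(2)[OF in1(1,2)] s(2)[OF in1(3,4)] by simp
    then show "Phi f (H' a j) (H' b i) \<le> Phi f (H' a i) (H' b j)"
      by (simp add: Phi_def H'_def)
  qed
  have M: "iter (Phi f) (\<lambda>i. H' (\<tau> i) i) m \<le> iter (Phi f) (\<lambda>i. H' i i) m"
    by (rule max_lemma[OF semi_Phi[OF assms(1)] H'in sw' tp])
  have e1: "iter (Phi f) (\<lambda>i. H' (\<tau> i) i) m = iter (Phi f) (\<lambda>i. 1 - H (\<sigma> i) i) m"
  proof (rule iter_cong, intro allI impI)
    fix i assume "i \<le> m"
    then have "\<sigma> i \<le> m" by (rule sin)
    then show "H' (\<tau> i) i = 1 - H (\<sigma> i) i" by (simp add: H'_def \<tau>_def)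
  qed
  have e2: "iter (Phi f) (\<lambda>i. H' i i) m = iter (Phi f) (\<lambda>i. 1 - H (m - i) i) m"
    by (simp add: H'_def)
  show ?thesis using M e1 e2 iter_Phi[of f "\<lambda>i. H (\<sigma> i) i" m] iter_Phi[of f "\<lambda>i. H (m - i) i" m]
    by simp
qed

lemma L_lemma:
  assumes "propA f" "semi f"
    and "\<alpha> \<le> \<beta>" "\<alpha> \<le> \<gamma>" "\<beta> \<le> \<delta>" "\<gamma> \<le> \<delta>" "0 \<le> \<alpha>" "\<delta> \<le> 1" "\<alpha> + \<delta> \<le> \<beta> + \<gamma>"
  shows "f \<alpha> \<delta> \<le> f \<beta> \<gamma>"
proof (cases "\<beta> \<le> \<gamma>")
  case True
  have A: "\<forall>x y z w. 0 \<le> x \<and> x \<le> y \<and> y \<le> z \<and> z \<le> w \<and> w \<le> 1 \<longrightarrow>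
      w + x \<le> y + z \<longrightarrow> f x w \<le> f y z" using assms(1) unfolding propA_def .
  show ?thesis using A[rule_format, of \<alpha> \<beta> \<gamma> \<delta>] True assms(3-9) by linarith
next
  case False
  have A: "\<forall>x y z w. 0 \<le> x \<and> x \<le> y \<and> y \<le> z \<and> z \<le> w \<and> w \<le> 1 \<longrightarrow>
      w + x \<le> y + z \<longrightarrow> f x w \<le> f y z" using assms(1) unfolding propA_def .
  have "f \<alpha> \<delta> \<le> f \<gamma> \<beta>" using A[rule_format, of \<alpha> \<gamma> \<beta> \<delta>] False assms(3-9) by linarith
  moreover have "f \<gamma> \<beta> = f \<beta> \<gamma>" using semiD(2)[OF assms(2), of \<gamma> \<beta>] assms by auto
  ultimately show ?thesis by simp
qed

lemma K1:
  assumes "semi g" "propA g" "propB g"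
    and "p \<le> q" "r \<le> s" "p \<in> {0..1}" "q \<in> {0..1}" "r \<in> {0..1}" "s \<in> {0..1}"
  shows "g (1 - g p r) (1 - g q s) \<le> g (1 - g p s) (1 - g q r)"
proof -
  note S = semiD[OF assms(1)]
  have i: "g p r \<in> {0..1}" "g p s \<in> {0..1}" "g q r \<in> {0..1}" "g q s \<in> {0..1}"
    using S(1) assms(6-9) by blast+
  have m1: "g p s \<le> g q s" using S(4)[of p q s] assms(4-9) by blast
  have m2: "g q r \<le> g q s" using semi_mono2[OF assms(1), of r s q] assms(4-9) by blast
  have m3: "g p r \<le> g p s" using semi_mono2[OF assms(1), of r s p] assms(4-9) by blast
  have m4: "g p r \<le> g q r" using S(4)[of p q r] assms(4-9) by blast
  have B0: "\<forall>x y z w. 0 \<le> x \<and> x \<le> y \<and> y \<le> 1 \<and> 0 \<le> z \<and> z \<le> w \<and> w \<le> 1 \<longrightarrow>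
      g x w - g x z \<le> g y w - g y z" using assms(3) unfolding propB_def .
  have B: "g p s - g p r \<le> g q s - g q r" using B0[rule_format, of p q r s] assms(4-9) by auto
  have "g (1 - g q s) (1 - g p r) \<le> g (1 - g p s) (1 - g q r)"
    by (rule L_lemma[OF assms(2,1)]) (use i m1 m2 m3 m4 B in simp_all)
  moreover have "g (1 - g q s) (1 - g p r) = g (1 - g p r) (1 - g q s)"
    using S(2)[of "1 - g q s" "1 - g p r"] i by auto
  ultimately show ?thesis by simp
qed



lemma rearr_main:
  assumes sg: "semi g" and pA: "propA g" and pB: "propB g"
  shows "rearrangement g (Phi g) \<and> dual_rearrangement g (Phi g)"
proof
  note S = semiD[OF sg]
  show "rearrangement g (Phi g)"
    unfolding rearrangement_def
  proof (intro allI impI)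
    fix n :: nat and x y :: "nat \<Rightarrow> real" and \<sigma> :: "nat \<Rightarrow> nat"
    assume n: "n \<ge> 1" and inr: "\<forall>i<n. 0 \<le> x i \<and> x i \<le> 1 \<and> 0 \<le> y i \<and> y i \<le> 1"
      and srt: "\<forall>i j. i \<le> j \<and> j < n \<longrightarrow> x i \<le> x j \<and> y i \<le> y j"
      and sp: "\<sigma> permutes {..<n}"
    obtain m where m: "n = Suc m" using n by (cases n) auto
    define H where "H = (\<lambda>a i. g (x a) (y i))"
    have Hin: "\<forall>a\<le>m. \<forall>i\<le>m. H a i \<in> {0..1}"
    proof (intro allI impI)
      fix a i assume "a \<le> m" "i \<le> m"
      then have "x a \<in> {0..1}" "y i \<in> {0..1}" using inr m by auto
      then show "H a i \<in> {0..1}" unfolding H_def by (rule S(1))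
    qed
    have sw: "\<forall>a b i j. a \<le> b \<and> b \<le> m \<and> i \<le> j \<and> j \<le> m \<longrightarrow> Phi g (H a j) (H b i) \<le> Phi g (H a i) (H b j)"
    proof (intro allI impI)
      fix a b i j assume h: "a \<le> b \<and> b \<le> m \<and> i \<le> j \<and> j \<le> m"
      have xy: "x a \<le> x b" "y i \<le> y j" using srt m h by auto
      have ins: "x a \<in> {0..1}" "x b \<in> {0..1}" "y i \<in> {0..1}" "y j \<in> {0..1}" using inr m h by auto
      show "Phi g (H a j) (H b i) \<le> Phi g (H a i) (H b j)"
        using K1[OF sg pA pB xy ins] by (simp add: Phi_def H_def)
    qed
    have s': "\<sigma> permutes {..<Suc m}" using sp m by simp
    have "iter (Phi g) (\<lambda>i. H (m - i) i) m \<le> iter (Phi g) (\<lambda>i. H (\<sigma> i) i) m"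
      by (rule min_lemma[OF semi_Phi[OF sg] Hin sw s'])
    moreover have "iter (Phi g) (\<lambda>i. H (\<sigma> i) i) m \<le> iter (Phi g) (\<lambda>i. H i i) m"
      by (rule max_lemma[OF semi_Phi[OF sg] Hin sw s'])
    ultimately show "bigop (Phi g) n (\<lambda>i. g (x (n - 1 - i)) (y i)) \<le> bigop (Phi g) n (\<lambda>i. g (x (\<sigma> i)) (y i)) \<and>
       bigop (Phi g) n (\<lambda>i. g (x (\<sigma> i)) (y i)) \<le> bigop (Phi g) n (\<lambda>i. g (x i) (y i))"
      by (simp add: bigop_def m H_def)
  qed
  show "dual_rearrangement g (Phi g)"
    unfolding dual_rearrangement_def
  proof (intro allI impI)
    fix n :: nat and x y :: "nat \<Rightarrow> real" and \<sigma> :: "nat \<Rightarrow> nat"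
    assume n: "n \<ge> 1" and inr: "\<forall>i<n. 0 \<le> x i \<and> x i \<le> 1 \<and> 0 \<le> y i \<and> y i \<le> 1"
      and srt: "\<forall>i j. i \<le> j \<and> j < n \<longrightarrow> x i \<le> x j \<and> y i \<le> y j"
      and sp: "\<sigma> permutes {..<n}"
    obtain m where m: "n = Suc m" using n by (cases n) auto
    define H where "H = (\<lambda>a i. 1 - Phi g (x a) (y i))"
    have H': "H = (\<lambda>a i. g (1 - x a) (1 - y i))" by (simp add: H_def Phi_def fun_eq_iff)
    have Hin: "\<forall>a\<le>m. \<forall>i\<le>m. H a i \<in> {0..1}"
    proof (intro allI impI)
      fix a i assume "a \<le> m" "i \<le> m"
      then have "1 - x a \<in> {0..1}" "1 - y i \<in> {0..1}" using inr m by auto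
      then show "H a i \<in> {0..1}" unfolding H' by (rule S(1))
    qed
    have sw: "\<forall>a b i j. a \<le> b \<and> b \<le> m \<and> i \<le> j \<and> j \<le> m \<longrightarrow> Phi g (H a j) (H b i) \<le> Phi g (H a i) (H b j)"
    proof (intro allI impI)
      fix a b i j assume h: "a \<le> b \<and> b \<le> m \<and> i \<le> j \<and> j \<le> m"
      define P where "P = 1 - x a"
      define Q where "Q = 1 - x b"
      define R where "R = 1 - y i"
      define T where "T = 1 - y j"
      have xy: "Q \<le> P" "T \<le> R" using srt m h by (auto simp: P_def Q_def R_def T_def)
      have ins: "Q \<in> {0..1}" "P \<in> {0..1}" "T \<in> {0..1}" "R \<in> {0..1}" using inr m h
        by (auto simp: P_def Q_def R_def T_def)
      have k: "g (1 - g Q T) (1 - g P R) \<le> g (1 - g Q R) (1 - g P T)" by (rule K1[OF sg pA pB xy ins])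
      have i4: "g Q T \<in> {0..1}" "g P R \<in> {0..1}" "g Q R \<in> {0..1}" "g P T \<in> {0..1}"
        using S(1) ins by blast+
      have c1: "g (1 - g Q T) (1 - g P R) = g (1 - g P R) (1 - g Q T)"
        using S(2)[of "1 - g Q T" "1 - g P R"] i4 by auto
      have c2: "g (1 - g Q R) (1 - g P T) = g (1 - g P T) (1 - g Q R)"
        using S(2)[of "1 - g Q R" "1 - g P T"] i4 by auto
      have "g (1 - g P R) (1 - g Q T) \<le> g (1 - g P T) (1 - g Q R)" using k c1 c2 by simp
      then show "Phi g (H a j) (H b i) \<le> Phi g (H a i) (H b j)"
        by (simp add: Phi_def H' P_def Q_def R_def T_def)
    qed
    have s': "\<sigma> permutes {..<Suc m}" using sp m by simp
    have m1: "iter (Phi g) (\<lambda>i. H (m - i) i) m \<le> iter (Phi g) (\<lambda>i. H (\<sigma> i) i) m"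
      by (rule min_lemma[OF semi_Phi[OF sg] Hin sw s'])
    have m2: "iter (Phi g) (\<lambda>i. H (\<sigma> i) i) m \<le> iter (Phi g) (\<lambda>i. H i i) m"
      by (rule max_lemma[OF semi_Phi[OF sg] Hin sw s'])
    have conv: "\<And>v. iter g v m = 1 - iter (Phi g) (\<lambda>i. 1 - v i) m"
      using iter_Phi by simp
    show "bigop g n (\<lambda>i. Phi g (x (n - 1 - i)) (y i)) \<ge> bigop g n (\<lambda>i. Phi g (x (\<sigma> i)) (y i)) \<and>
       bigop g n (\<lambda>i. Phi g (x (\<sigma> i)) (y i)) \<ge> bigop g n (\<lambda>i. Phi g (x i) (y i))"
      unfolding bigop_def using m1 m2 by (simp add: m conv H_def)
  qed
qed

lemma propA_Phi:
  assumes "semi f" "propA' f" shows "propA (Phi f)"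
  unfolding propA_def
proof (intro allI impI)
  fix x y z w :: real
  assume h: "0 \<le> x \<and> x \<le> y \<and> y \<le> z \<and> z \<le> w \<and> w \<le> 1" and s: "w + x \<le> y + z"
  have A: "\<forall>x y z w. 0 \<le> x \<and> x \<le> y \<and> y \<le> z \<and> z \<le> w \<and> w \<le> 1 \<longrightarrow>
      w + x \<ge> y + z \<longrightarrow> f x w \<ge> f y z" using assms(2) unfolding propA'_def .
  have "f (1 - w) (1 - x) \<ge> f (1 - z) (1 - y)" using A[rule_format, of "1-w" "1-z" "1-y" "1-x"] h s by linarith
  moreover have "f (1 - w) (1 - x) = f (1 - x) (1 - w)" "f (1 - z) (1 - y) = f (1 - y) (1 - z)"
    using semiD(2)[OF assms(1)] h by auto
  ultimately show "Phi f x w \<le> Phi f y z" by (simp add: Phi_def)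
qed

lemma propB_Phi:
  assumes "propB' f" shows "propB (Phi f)"
  unfolding propB_def
proof (intro allI impI)
  fix x y z w :: real
  assume h: "0 \<le> x \<and> x \<le> y \<and> y \<le> 1 \<and> 0 \<le> z \<and> z \<le> w \<and> w \<le> 1"
  have B: "\<forall>x y z w. 0 \<le> x \<and> x \<le> y \<and> y \<le> 1 \<and> 0 \<le> z \<and> z \<le> w \<and> w \<le> 1 \<longrightarrow>
      f x w - f x z \<ge> f y w - f y z" using assms unfolding propB'_def .
  have "f (1-y) (1-z) - f (1-y) (1-w) \<ge> f (1-x) (1-z) - f (1-x) (1-w)"
    using B[rule_format, of "1-y" "1-x" "1-w" "1-z"] h by linarith
  then show "Phi f x w - Phi f x z \<le> Phi f y w - Phi f y z" by (simp add: Phi_def)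
qed

theorem corollary4:
  shows "(\<forall>otimes. uninorm otimes \<and> propA otimes \<and> propB otimes \<longrightarrow>
            rearrangement otimes (Phi otimes) \<and> dual_rearrangement otimes (Phi otimes)) \<and>
         (\<forall>oplus. uninorm oplus \<and> propA' oplus \<and> propB' oplus \<longrightarrow>
            rearrangement (Phi oplus) oplus \<and> dual_rearrangement (Phi oplus) oplus)"
proof (rule conjI)
  show "\<forall>otimes. uninorm otimes \<and> propA otimes \<and> propB otimes \<longrightarrow>
            rearrangement otimes (Phi otimes) \<and> dual_rearrangement otimes (Phi otimes)"
    using rearr_main uninorm_semi by blast
  show "\<forall>oplus. uninorm oplus \<and> propA' oplus \<and> propB' oplus \<longrightarrow>
            rearrangement (Phi oplus) oplus \<and> dual_rearrangement (Phi oplus) oplus"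
  proof (intro allI impI)
    fix oplus assume h: "uninorm oplus \<and> propA' oplus \<and> propB' oplus"
    then have s: "semi oplus" using uninorm_semi by blast
    have "rearrangement (Phi oplus) (Phi (Phi oplus)) \<and> dual_rearrangement (Phi oplus) (Phi (Phi oplus))"
      using rearr_main[OF semi_Phi[OF s] propA_Phi[OF s] propB_Phi] h by blast
    then show "rearrangement (Phi oplus) oplus \<and> dual_rearrangement (Phi oplus) oplus"
      by (simp add: Phi_Phi)
  qed
qed

end
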